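(* Let $R$ be a ring such that the right module $R_R$ is self-similar. Then $R_R$ is quasi-pseudo principally injective if and only if $R_R$ is semisimple.
   Context: All rings are associative with identity and all modules are unitary right $R$-modules. A submodule $N$ of $M$ is called $M$-cyclic if $N\cong M/L$ for some submodule $L$ of $M$ (equivalently, $N$ is the image of an endomorphism of $M$). $M$ is quasi-pseudo principally injective if for every $M$-cyclic submodule $A$ of $M$, every $R$-monomorphism $A\to M$ extends to an $R$-endomorphism of $M$. A module $M$ is self-similar if every nonzero submodule of $M$ is isomorphic to $M$. A module is semisimple if every submodule is a direct summand. *)

theory Defs
  imports Main
begin

text \<open>Submodules of R_R are right ideals;
  R-linear maps act on the right: f (x * r) = f x * r.\<close>

definition right_ideal :: "'a::ring_1 set \<Rightarrow> bool" where
  "right_ideal I \<longleftrightarrow> 0 \<in> I \<and> (\<forall>x\<in>I. \<forall>y\<in>I. x + y \<in> I) \<and> (\<forall>x\<in>I. - x \<in> I)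
     \<and> (\<forall>x\<in>I. \<forall>r. x * r \<in> I)"

definition rhom_on :: "'a::ring_1 set \<Rightarrow> ('a \<Rightarrow> 'a) \<Rightarrow> bool" where
  "rhom_on A f \<longleftrightarrow> (\<forall>x\<in>A. \<forall>y\<in>A. f (x + y) = f x + f y) \<and> (\<forall>x\<in>A. \<forall>r. f (x * r) = f x * r)"

text \<open>N is R_R-cyclic: N is the image of an endomorphism of R_R
  (equivalently N is isomorphic to a quotient R/L).\<close>
definition RR_cyclic :: "'a::ring_1 set \<Rightarrow> bool" where
  "RR_cyclic N \<longleftrightarrow> (\<exists>f. rhom_on UNIV f \<and> N = range f)"

definition RR_quasi_pseudo_principally_injective :: "'a::ring_1 itself \<Rightarrow> bool" where
  "RR_quasi_pseudo_principally_injective _ \<longleftrightarrow>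
     (\<forall>A::'a set. RR_cyclic A \<longrightarrow>
        (\<forall>f. rhom_on A f \<and> inj_on f A \<longrightarrow> (\<exists>g. rhom_on UNIV g \<and> (\<forall>x\<in>A. g x = f x))))"

definition RR_self_similar :: "'a::ring_1 itself \<Rightarrow> bool" where
  "RR_self_similar _ \<longleftrightarrow>
     (\<forall>N::'a set. right_ideal N \<and> N \<noteq> {0} \<longrightarrow> (\<exists>f. rhom_on N f \<and> bij_betw f N UNIV))"

definition RR_semisimple :: "'a::ring_1 itself \<Rightarrow> bool" where
  "RR_semisimple _ \<longleftrightarrow>
     (\<forall>N::'a set. right_ideal N \<longrightarrow>
        (\<exists>K. right_ideal K \<and> N \<inter> K = {0} \<and> {x + y | x y. x \<in> N \<and> y \<in> K} = UNIV))"

end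

theory Submission
  imports Defs
begin

lemma ri_diff: "right_ideal I \<Longrightarrow> x \<in> I \<Longrightarrow> y \<in> I \<Longrightarrow> x - y \<in> I"
proof -
  assume I: "right_ideal I" "x \<in> I" "y \<in> I"
  then have "- y \<in> I" unfolding right_ideal_def by blast
  then have "x + - y \<in> I" using I unfolding right_ideal_def by blast
  then show ?thesis by simp
qed

lemma cyclic_ri:
  assumes "RR_cyclic (A::'a::ring_1 set)" shows "right_ideal A"
proof -
  obtain f where f: "rhom_on UNIV f" "A = range f" using assms unfolding RR_cyclic_def by blast
  have add: "\<And>x y. f (x+y) = f x + f y" and mul: "\<And>x r. f (x*r) = f x * r"
    using f(1) unfolding rhom_on_def by auto
  have f0: "f 0 = 0" using add[of 0 0] by simp
  have neg: "\<And>x. - f x = f (- x)" using mul[of _ "-1"] by simp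
  show ?thesis unfolding right_ideal_def f(2)
  proof (intro conjI ballI allI)
    show "0 \<in> range f" using f0 by (metis rangeI)
  next
    fix x y assume "x \<in> range f" "y \<in> range f"
    then obtain a b where "x = f a" "y = f b" by blast
    then have "x + y = f (a + b)" by (simp add: add)
    then show "x + y \<in> range f" by blast
  next
    fix x assume "x \<in> range f"
    then obtain a where "x = f a" by blast
    then have "- x = f (- a)" by (simp add: neg)
    then show "- x \<in> range f" by blast
  next
    fix x r assume "x \<in> range f"
    then obtain a where "x = f a" by blast
    then have "x * r = f (a * r)" by (simp add: mul)
    then show "x * r \<in> range f" by blast
  qed
qed

lemma ss_qppi:
  assumes "RR_semisimple TYPE('a::ring_1)"
  shows "RR_quasi_pseudo_principally_injective TYPE('a)"
  unfolding RR_quasi_pseudo_principally_injective_def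
proof (intro allI impI)
  fix A :: "'a set" and f
  assume cA: "RR_cyclic A" and hf: "rhom_on A f \<and> inj_on f A"
  have riA: "right_ideal A" using cyclic_ri[OF cA] .
  obtain K where K: "right_ideal K" "A \<inter> K = {0}" "{x + y | x y. x \<in> A \<and> y \<in> K} = UNIV"
  proof -
    have ssA: "\<forall>N::'a set. right_ideal N \<longrightarrow>
        (\<exists>K. right_ideal K \<and> N \<inter> K = {0} \<and> {x + y | x y. x \<in> N \<and> y \<in> K} = UNIV)"
      using assms unfolding RR_semisimple_def .
    have "\<exists>K. right_ideal K \<and> A \<inter> K = {0} \<and> {x + y | x y. x \<in> A \<and> y \<in> K} = UNIV"
      using spec[OF ssA, of A] riA by (rule mp)
    then show ?thesis using that by (elim exE conjE)
  qed
  have ex: "\<exists>a. a \<in> A \<and> x - a \<in> K" for x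
  proof -
    have "x \<in> {x + y | x y. x \<in> A \<and> y \<in> K}" using K(3) by simp
    then obtain a k where "a \<in> A" "k \<in> K" "x = a + k" by blast
    then show ?thesis by (intro exI[of _ a]) auto
  qed
  have uniq: "a = b" if "a \<in> A" "x - a \<in> K" "b \<in> A" "x - b \<in> K" for x a b
  proof -
    have "a - b \<in> A" using ri_diff[OF riA] that by blast
    moreover have "(x - b) - (x - a) \<in> K" using ri_diff[OF K(1)] that by blast
    moreover have "(x - b) - (x - a) = a - b" by (simp add: algebra_simps)
    ultimately have "a - b \<in> A \<inter> K" by simp
    then show ?thesis using K(2) by simp
  qed
  define p where "p x = (THE a. a \<in> A \<and> x - a \<in> K)" for x
  have p: "p x \<in> A \<and> x - p x \<in> K" for x
  proof -
    have "\<exists>!a. a \<in> A \<and> x - a \<in> K" using ex[of x] uniq[of _ x] by blast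
    then show ?thesis unfolding p_def by (rule theI')
  qed
  have peq: "p x = a" if "a \<in> A" "x - a \<in> K" for x a
    using uniq[OF _ _ that, of "p x"] p[of x] by blast
  have padd: "p (x + y) = p x + p y" for x y
  proof (rule peq)
    show "p x + p y \<in> A" using p riA unfolding right_ideal_def by blast
    have "(x - p x) + (y - p y) \<in> K" using p K(1) unfolding right_ideal_def by blast
    then show "x + y - (p x + p y) \<in> K" by (simp add: algebra_simps)
  qed
  have pmul: "p (x * r) = p x * r" for x r
  proof (rule peq)
    show "p x * r \<in> A" using p riA unfolding right_ideal_def by blast
    have "(x - p x) * r \<in> K" using p K(1) unfolding right_ideal_def by blast
    then show "x * r - p x * r \<in> K" by (simp add: algebra_simps)
  qed
  have pid: "p x = x" if "x \<in> A" for x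
    using peq[OF that] K(1) unfolding right_ideal_def by simp
  show "\<exists>g. rhom_on UNIV g \<and> (\<forall>x\<in>A. g x = f x)"
  proof (intro exI[of _ "\<lambda>x. f (p x)"] conjI ballI)
    show "rhom_on UNIV (\<lambda>x. f (p x))"
      using hf p unfolding rhom_on_def by (simp add: padd pmul)
  qed (simp add: pid)
qed

lemma qppi_ss:
  assumes sim: "RR_self_similar TYPE('a::ring_1)"
    and q: "RR_quasi_pseudo_principally_injective TYPE('a)"
  shows "RR_semisimple TYPE('a)"
  unfolding RR_semisimple_def
proof (intro allI impI)
  fix N :: "'a set"
  assume riN: "right_ideal N"
  show "\<exists>K. right_ideal K \<and> N \<inter> K = {0} \<and> {x + y | x y. x \<in> N \<and> y \<in> K} = UNIV"
  proof (cases "N = {0}")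
    case True
    have "right_ideal (UNIV::'a set)" unfolding right_ideal_def by simp
    moreover have "{x + y | x y. x \<in> N \<and> y \<in> (UNIV::'a set)} = UNIV"
      using True by auto
    ultimately show ?thesis using True by blast
  next
    case False
    obtain phi where phi: "rhom_on N phi" "bij_betw phi N UNIV"
      using sim False riN unfolding RR_self_similar_def by blast
    define h where "h = the_inv_into N phi"
    have hN: "h y \<in> N" for y using phi(2) unfolding h_def
      by (metis UNIV_I bij_betw_def the_inv_into_into subset_refl)
    have phih: "phi (h y) = y" for y using phi(2) unfolding h_def
      by (metis UNIV_I bij_betw_def f_the_inv_into_f)
    have hphi: "h (phi n) = n" if "n \<in> N" for n using phi(2) that unfolding h_def
      by (metis bij_betw_def the_inv_into_f_f)
    have injphi: "inj_on phi N" using phi(2) bij_betw_def by blast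
    have "rhom_on UNIV h"
      unfolding rhom_on_def
    proof (intro conjI ballI allI)
      fix x y :: 'a
      have "h x + h y \<in> N" using hN riN unfolding right_ideal_def by blast
      moreover have "phi (h x + h y) = x + y" using phi(1) hN phih unfolding rhom_on_def by simp
      ultimately show "h (x + y) = h x + h y" using hphi by metis
    next
      fix x r :: 'a
      have "h x * r \<in> N" using hN riN unfolding right_ideal_def by blast
      moreover have "phi (h x * r) = x * r" using phi(1) hN phih unfolding rhom_on_def by simp
      ultimately show "h (x * r) = h x * r" using hphi by metis
    qed
    moreover have "N = range h"
    proof
      show "range h \<subseteq> N" using hN by auto
      show "N \<subseteq> range h"
      proof
        fix x assume "x \<in> N"
        then have "x = h (phi x)" using hphi by simp
        then show "x \<in> range h" by blast
      qed
    qed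
    ultimately have "RR_cyclic N" unfolding RR_cyclic_def by blast
    then obtain g where g: "rhom_on UNIV g" "\<forall>x\<in>N. g x = phi x"
      using q phi(1) injphi unfolding RR_quasi_pseudo_principally_injective_def by blast
    define c where "c = g 1"
    have gc: "g x = c * x" for x using g(1) unfolding rhom_on_def c_def
      by (metis UNIV_I mult_1_left)
    define n0 where "n0 = h 1"
    have n0: "n0 \<in> N" "c * n0 = 1" using hN phih g(2) gc unfolding n0_def by metis+
    define e where "e = n0 * c"
    have eN: "e \<in> N" using n0 riN unfolding right_ideal_def e_def by blast
    have ee: "e * e = e" unfolding e_def by (metis mult.assoc n0(2) mult_1_right)
    have en: "e * n = n" if "n \<in> N" for n
    proof -
      have "e * n \<in> N" using eN riN unfolding right_ideal_def by blast
      moreover have "phi (e * n) = phi n"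
        using g(2) gc that \<open>e * n \<in> N\<close> unfolding e_def
        by (metis mult.assoc n0(2) mult_1_left)
      ultimately show ?thesis using injphi that inj_on_def by metis
    qed
    define K where "K = range (\<lambda>z. (1 - e) * z)"
    have "right_ideal K" unfolding right_ideal_def K_def
    proof (intro conjI ballI allI)
      show "0 \<in> range (\<lambda>z. (1 - e) * z)" by (rule image_eqI[of _ _ 0]) auto
    next
      fix x y assume "x \<in> range (\<lambda>z. (1 - e) * z)" "y \<in> range (\<lambda>z. (1 - e) * z)"
      then obtain a b where "x = (1-e)*a" "y = (1-e)*b" by blast
      then show "x + y \<in> range (\<lambda>z. (1 - e) * z)" by (intro image_eqI[of _ _ "a+b"]) (auto simp: distrib_left)
    next
      fix x assume "x \<in> range (\<lambda>z. (1 - e) * z)"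
      then obtain a where "x = (1-e)*a" by blast
      then show "- x \<in> range (\<lambda>z. (1 - e) * z)" by (intro image_eqI[of _ _ "-a"]) auto
    next
      fix x r assume "x \<in> range (\<lambda>z. (1 - e) * z)"
      then obtain a where "x = (1-e)*a" by blast
      then show "x * r \<in> range (\<lambda>z. (1 - e) * z)" by (intro image_eqI[of _ _ "a*r"]) (auto simp: mult.assoc)
    qed
    moreover have "N \<inter> K = {0}"
    proof -
      have "y = 0" if yN: "y \<in> N" and yK: "y \<in> K" for y
      proof -
        obtain z where z: "y = (1 - e) * z" using yK K_def by blast
        have "e * y = (e - e * e) * z" unfolding z by (simp add: algebra_simps)
        then show ?thesis using en[OF yN] ee by simp
      qed
      moreover have "0 \<in> N" "0 \<in> K" using riN \<open>right_ideal K\<close> unfolding right_ideal_def by auto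
      ultimately show ?thesis by blast
    qed
    moreover have "{x + y | x y. x \<in> N \<and> y \<in> K} = UNIV"
    proof -
      have "x \<in> {x + y | x y. x \<in> N \<and> y \<in> K}" for x
      proof -
        have "e * x \<in> N" using eN riN unfolding right_ideal_def by blast
        moreover have "(1 - e) * x \<in> K" unfolding K_def by blast
        moreover have "x = e * x + (1 - e) * x" by (simp add: algebra_simps)
        ultimately show ?thesis by blast
      qed
      then show ?thesis by blast
    qed
    ultimately show ?thesis by (intro exI[of _ K] conjI)
  qed
qed

theorem corollary2p5:
  assumes "RR_self_similar TYPE('a::ring_1)"
  shows "RR_quasi_pseudo_principally_injective TYPE('a) \<longleftrightarrow> RR_semisimple TYPE('a)"
  using qppi_ss[OF assms] ss_qppi by (rule iffI)

end
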